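(* Let $p$ be a prime and $n\ge 2$ an integer. Let $M$ be the $(n-1)\times(n-1)$ matrix, with rows and columns indexed by $1,\dots,n-1$ (index $i$ corresponding to the vertex $[p^i]$ of $\Gamma_E[\mathbb{Z}_{p^n}]$), defined by $M_{ij}=1$ if $i+j\ge n$ and $M_{ij}=0$ otherwise. Then the characteristic polynomial of $M$ is $$\det(\lambda I-M)=\sum_{k=0}^{n-1}(-1)^{\lfloor (k+1)/2\rfloor}\, b_k\,\lambda^{\,n-1-k},\qquad b_k=\binom{p_k}{k},\quad p_k=\Big\lfloor \frac{n-1+k}{2}\Big\rfloor .$$ That is, $\det(\lambda I-M)=\lambda^{n-1}-b_1\lambda^{n-2}-b_2\lambda^{n-3}+b_3\lambda^{n-4}+b_4\lambda^{n-5}-\cdots$, with the signs following the pattern $+,-,-,+,+,-,-,\dots$. For example, for $n=6$ it equals $\lambda^5-3\lambda^4-3\lambda^3+4\lambda^2+\lambda-1$.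
   Context: For a commutative ring $R$ with identity, define $x\sim y$ iff $\operatorname{ann}_R(x)=\operatorname{ann}_R(y)$. The compressed zero-divisor graph $\Gamma_E[R]$ has as vertices the equivalence classes $[x]$ of nonzero zero divisors (i.e. excluding $[0]$ and $[1]$), with two distinct classes $[x],[y]$ adjacent iff $xy=0$. For $R=\mathbb{Z}_{p^n}$ ($p$ prime) the vertices are exactly $[p],[p^2],\dots,[p^{n-1}]$, and $[p^i]\cdot[p^j]=0$ iff $i+j\ge n$. The matrix $M$ in the claim is the paper's "adjacency matrix" of $\Gamma_E[\mathbb{Z}_{p^n}]$: it records $[p^i][p^j]=0$ including diagonal entries (so $M_{ii}=1$ exactly when $2i\ge n$). $\lfloor\cdot\rfloor$ denotes the floor function. *)

theory Defs
  imports "Jordan_Normal_Form.Char_Poly"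
begin

text \<open>Adjacency matrix (with loops) of the compressed zero-divisor graph of Z_(p^n).
  Row/column index i (0-based) corresponds to the vertex [p^(i+1)], so the entry is 1
  iff (i+1)+(j+1) >= n.\<close>
definition zdg_matrix :: "nat \<Rightarrow> int mat" where
  "zdg_matrix n = mat (n - 1) (n - 1) (\<lambda>(i, j). if (i + 1) + (j + 1) \<ge> n then 1 else 0)"

end

theory Submission
  imports Defs
begin

definition G :: "nat \<Rightarrow> nat \<Rightarrow> int poly mat" where
  "G c m = mat m m (\<lambda>(i,j). (if i = j then [:0,1:] else 0) - (if m \<le> i + j + c then 1 else 0))"

lemma G_carrier[simp]: "G c m \<in> carrier_mat m m" and G_dim[simp]: "dim_row (G c m) = m" "dim_col (G c m) = m"
  by (auto simp: G_def)

lemma G_index[simp]: "i < m \<Longrightarrow> j < m \<Longrightarrow> G c m $$ (i,j) = (if i = j then [:0,1:] else 0) - (if m \<le> i + j + c then 1 else 0)"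
  by (simp add: G_def)

lemma sum_single: fixes n :: nat assumes "a < n" "\<And>j. j < n \<Longrightarrow> j \<noteq> a \<Longrightarrow> f j = 0"
  shows "(\<Sum>j<n. f j) = (f a :: 'a::comm_monoid_add)"
proof -
  have "(\<Sum>j<n. f j) = (\<Sum>j\<in>{a}. f j)"
    using assms by (intro sum.mono_neutral_right) auto
  thus ?thesis by simp
qed

lemma sum_two: fixes n :: nat assumes "a < n" "b < n" "a \<noteq> b" "\<And>j. j < n \<Longrightarrow> j \<noteq> a \<Longrightarrow> j \<noteq> b \<Longrightarrow> f j = 0"
  shows "(\<Sum>j<n. f j) = (f a + f b :: 'a::comm_monoid_add)"
proof -
  have "(\<Sum>j<n. f j) = (\<Sum>j\<in>{a,b}. f j)"
    using assms by (intro sum.mono_neutral_right) auto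
  thus ?thesis using assms by simp
qed

lemma G0: assumes "l \<ge> 1" shows "det (G 0 l) = [:0,1:] * det (G 1 (l - 1))"
proof -
  have "det (G 0 l) = (\<Sum>j<l. G 0 l $$ (0,j) * cofactor (G 0 l) 0 j)"
    by (rule laplace_expansion_row) (use assms in auto)
  also have "\<dots> = G 0 l $$ (0,0) * cofactor (G 0 l) 0 0"
    by (rule sum_single) (use assms in auto)
  finally have "det (G 0 l) = G 0 l $$ (0,0) * cofactor (G 0 l) 0 0" .
  moreover have "mat_delete (G 0 l) 0 0 = G 1 (l - 1)"
    by (rule eq_matI) (auto simp: mat_delete_def)
  ultimately show ?thesis using assms by (simp add: cofactor_def)
qed

definition F :: "nat \<Rightarrow> int poly mat" where
  "F k = mat k k (\<lambda>(i,j). (if i = j \<and> Suc i \<noteq> k then [:0,1:] else 0) - (if k \<le> i + j + 1 then 1 else 0))"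

lemma F_carrier[simp]: "F k \<in> carrier_mat k k" and F_dim[simp]: "dim_row (F k) = k" "dim_col (F k) = k"
  by (auto simp: F_def)

lemma F_index[simp]: "i < k \<Longrightarrow> j < k \<Longrightarrow> F k $$ (i,j) = (if i = j \<and> Suc i \<noteq> k then [:0,1:] else 0) - (if k \<le> i + j + 1 then 1 else 0)"
  by (simp add: F_def)

lemma det_1x1: assumes "A \<in> carrier_mat 1 1" shows "det A = A $$ (0,0)"
proof -
  have "det A = (\<Sum>j<1. A $$ (0,j) * cofactor A 0 j)"
    by (rule laplace_expansion_row) (use assms in auto)
  moreover have "mat_delete A 0 0 \<in> carrier_mat 0 0" using mat_delete_carrier[OF assms] by simp
  ultimately show ?thesis using assms by (simp add: cofactor_def)
qed

lemma rec1: assumes "m \<ge> 2" shows "det (G 1 m) = [:0,1:] * det (G 2 (m - 1)) - det (G 1 (m - 2))"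
proof -
  obtain k where m: "m = Suc (Suc k)" using assms by (metis add_2_eq_Suc le_Suc_ex)
  define Q where "Q = mat_delete (G 1 m) 0 (m - 1)"
  have Qc: "Q \<in> carrier_mat (m-1) (m-1)" unfolding Q_def by (rule mat_delete_carrier) simp
  have Qi: "Q $$ (i,j) = G 1 m $$ (i+1, j)" if "i < m - 1" "j < m - 1" for i j
    using that unfolding Q_def mat_delete_def by auto
  have "det Q = (\<Sum>i<m-1. Q $$ (i,0) * cofactor Q i 0)"
    by (rule laplace_expansion_column[OF Qc]) (use assms in auto)
  also have "\<dots> = Q $$ (m-2,0) * cofactor Q (m-2) 0"
    by (rule sum_single) (use assms in \<open>auto simp: Qi\<close>)
  finally have dQ: "det Q = Q $$ (m-2,0) * cofactor Q (m-2) 0" .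
  have "mat_delete Q (m-2) 0 = G 1 (m - 2)"
    by (rule eq_matI) (use Qc in \<open>auto simp: mat_delete_def Qi m\<close>)
  with dQ have dQ2: "det Q = - ((-1)^(m-2) * det (G 1 (m-2)))"
    by (simp add: cofactor_def Qi m)
  have "det (G 1 m) = (\<Sum>j<m. G 1 m $$ (0,j) * cofactor (G 1 m) 0 j)"
    by (rule laplace_expansion_row) (use assms in auto)
  also have "\<dots> = G 1 m $$ (0,0) * cofactor (G 1 m) 0 0 + G 1 m $$ (0,m-1) * cofactor (G 1 m) 0 (m-1)"
    by (rule sum_two) (use assms in auto)
  finally have d: "det (G 1 m) = G 1 m $$ (0,0) * cofactor (G 1 m) 0 0 + G 1 m $$ (0,m-1) * cofactor (G 1 m) 0 (m-1)" .
  have "mat_delete (G 1 m) 0 0 = G 2 (m - 1)"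
    by (rule eq_matI) (auto simp: mat_delete_def)
  moreover have "cofactor (G 1 m) 0 (m-1) = (-1)^(m-1) * det Q" by (simp add: cofactor_def Q_def)
  ultimately show ?thesis using d dQ2
    by (simp add: cofactor_def m)
qed

lemma rec2: assumes "s \<ge> 2" shows "det (G 2 s) = [:0,1:] * det (G 1 (s - 1)) + [:0,1:] * det (F (s - 1))"
proof -
  obtain k where s: "s = Suc (Suc k)" using assms by (metis add_2_eq_Suc le_Suc_ex)
  define B where "B = addrow (-1) (s-1) (s-2) (G 2 s)"
  have Bc: "B \<in> carrier_mat s s" unfolding B_def carrier_mat_def by (simp add: s)
  have dB: "det B = det (G 2 s)" unfolding B_def by (rule det_addrow[where n=s]) (use assms in auto)
  have Bi: "B $$ (i,j) = (if i = s - 1 then (if j = s - 1 then [:0,1:] else 0) - (if j = s - 2 then [:0,1:] else 0) else G 2 s $$ (i,j))"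
    if "i < s" "j < s" for i j
    using that unfolding B_def by (auto simp: s)
  have "det B = (\<Sum>j<s. B $$ (s-1,j) * cofactor B (s-1) j)"
    by (rule laplace_expansion_row[OF Bc]) (use assms in auto)
  also have "\<dots> = B $$ (s-1,s-2) * cofactor B (s-1) (s-2) + B $$ (s-1,s-1) * cofactor B (s-1) (s-1)"
    by (rule sum_two) (use assms in \<open>auto simp: Bi\<close>)
  finally have d: "det B = B $$ (s-1,s-2) * cofactor B (s-1) (s-2) + B $$ (s-1,s-1) * cofactor B (s-1) (s-1)" .
  have m1: "mat_delete B (s-1) (s-1) = G 1 (s - 1)"
    by (rule eq_matI) (use Bc in \<open>auto simp: mat_delete_def Bi s\<close>)
  have m2: "mat_delete B (s-1) (s-2) = F (s - 1)"
    by (rule eq_matI) (use Bc in \<open>auto simp: mat_delete_def Bi s\<close>)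
  show ?thesis using d m1 m2 dB
    by (simp add: cofactor_def Bi s)
qed

lemma rec3: assumes "k \<ge> 1" shows "det (G 1 k) = det (F k) + [:0,1:] * det (G 0 (k - 1))"
proof -
  have cf: "cofactor (G 1 k) (k-1) j = cofactor (F k) (k-1) j" for j
  proof -
    have "mat_delete (G 1 k) (k-1) j = mat_delete (F k) (k-1) j"
      by (rule eq_matI) (auto simp: mat_delete_def)
    thus ?thesis by (simp add: cofactor_def)
  qed
  have r: "G 1 k $$ (k-1,j) = F k $$ (k-1,j) + (if j = k - 1 then [:0,1:] else 0)" if "j < k" for j
    using that assms by auto
  have "det (G 1 k) = (\<Sum>j<k. G 1 k $$ (k-1,j) * cofactor (G 1 k) (k-1) j)"
    by (rule laplace_expansion_row) (use assms in auto)
  also have "\<dots> = (\<Sum>j<k. F k $$ (k-1,j) * cofactor (F k) (k-1) j) + (\<Sum>j<k. (if j = k - 1 then [:0,1:] else 0) * cofactor (G 1 k) (k-1) j)"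
    unfolding sum.distrib[symmetric]
  proof (rule sum.cong[OF refl])
    fix j assume "j \<in> {..<k}"
    then show "G 1 k $$ (k-1,j) * cofactor (G 1 k) (k-1) j = F k $$ (k-1,j) * cofactor (F k) (k-1) j + (if j = k - 1 then [:0,1:] else 0) * cofactor (G 1 k) (k-1) j"
      using r[of j] cf[of j] by (auto simp: distrib_right left_diff_distrib)
  qed
  also have "(\<Sum>j<k. F k $$ (k-1,j) * cofactor (F k) (k-1) j) = det (F k)"
    by (rule laplace_expansion_row[symmetric]) (use assms in auto)
  also have "(\<Sum>j<k. (if j = k - 1 then [:0,1:] else 0) * cofactor (G 1 k) (k-1) j) = [:0,1:] * cofactor (G 1 k) (k-1) (k-1)"
    by (subst sum_single[where a="k-1"]) (use assms in auto)
  also have "mat_delete (G 1 k) (k-1) (k-1) = G 0 (k - 1)"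
    by (rule eq_matI) (auto simp: mat_delete_def)
  hence "cofactor (G 1 k) (k-1) (k-1) = det (G 0 (k - 1))"
    by (simp add: cofactor_def)
  finally show ?thesis by simp
qed

abbreviation D where "D m \<equiv> det (G 1 m)"

lemma ring4: "(x::'a::comm_ring_1)*(x*a + x*(a - x*(x*b))) - a = (2*x^2 - 1)*a - x^4*b"
  by (simp add: algebra_simps eval_nat_numeral)

lemma rec4: assumes "m \<ge> 4"
  shows "D m = (2*[:0,1:]^2 - 1) * D (m-2) - [:0,1:]^4 * D (m - 4)"
proof -
  have e1: "D m = [:0,1:] * det (G 2 (m - 1)) - D (m - 2)" using rec1 assms by simp
  have e2: "det (G 2 (m - 1)) = [:0,1:] * D (m - 2) + [:0,1:] * det (F (m - 2))"
    using rec2[of "m-1"] assms by (simp add: numeral_eq_Suc)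
  have e3: "D (m - 2) = det (F (m-2)) + [:0,1:] * det (G 0 (m - 3))"
    using rec3[of "m-2"] assms by (simp add: numeral_eq_Suc)
  have e4: "det (G 0 (m - 3)) = [:0,1:] * D (m - 4)"
    using G0[of "m-3"] assms by (simp add: numeral_eq_Suc)
  have "det (F (m-2)) = D (m-2) - [:0,1:] * ([:0,1:] * D (m - 4))" using e3 e4 by simp
  with e1 e2 have "D m = [:0,1:] * ([:0,1:] * D (m - 2) + [:0,1:] * (D (m-2) - [:0,1:] * ([:0,1:] * D (m - 4)))) - D (m - 2)"
    by simp
  also have "\<dots> = (2*[:0,1:]^2 - 1) * D (m-2) - [:0,1:]^4 * D (m - 4)"
    by (rule ring4)
  finally show ?thesis .
qed

lemma D1: "D 1 = [:0,1:] - 1"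
  by (subst det_1x1) auto
lemma E1: "det (G 2 1) = [:0,1:] - 1"
  by (subst det_1x1) auto
lemma F1: "det (F 1) = - 1"
  by (subst det_1x1) auto
lemma D2: "D 2 = [:0,1:]^2 - [:0,1:] - 1"
proof -
  have a: "(2::nat) - 1 = 1" "(2::nat) - 2 = 0" by auto
  have "D 2 = [:0,1:] * det (G 2 1) - D 0" using rec1[of 2, unfolded a] by simp
  thus ?thesis unfolding E1 by (simp add: algebra_simps power2_eq_square)
qed
lemma ring3: "(x::'a::comm_ring_1) * (x * (x - 1) + x * (-1)) - (x - 1) = x^3 - 2*x^2 - x + 1"
  by (simp add: algebra_simps eval_nat_numeral)

lemma D3: "D 3 = [:0,1:]^3 - 2*[:0,1:]^2 - [:0,1:] + 1"
proof -
  have a: "(2::nat) - 1 = 1" "(3::nat) - 1 = 2" "(3::nat) - 2 = 1" by auto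
  have "det (G 2 2) = [:0,1:] * D 1 + [:0,1:] * det (F 1)" using rec2[of 2, unfolded a] by simp
  hence e: "det (G 2 2) = [:0,1:] * ([:0,1:] - 1) + [:0,1:] * (-1)" unfolding D1 F1 .
  have "D 3 = [:0,1:] * det (G 2 2) - D 1" using rec1[of 3, unfolded a] by simp
  also have "\<dots> = [:0,1:] * ([:0,1:] * ([:0,1:] - 1) + [:0,1:] * (-1)) - ([:0,1:] - 1)"
    unfolding e D1 ..
  also have "\<dots> = [:0,1:]^3 - 2*[:0,1:]^2 - [:0,1:] + 1" by (rule ring3)
  finally show ?thesis .
qed


lemma X_monom: "[:0,1:] = (monom 1 1 :: int poly)"
  by (simp add: monom_Suc)
lemma Xn: "[:0,1:]^n = (monom 1 n :: int poly)" by (simp add: X_monom monom_power)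
lemma two_monom: "2 * monom (1::int) n = monom 2 n"
  by (metis numeral_monom mult_monom add_0 mult.right_neutral)
lemma "coeff ((2*[:0,1:]^2 - 1) * p - [:0,1:]^4 * (q::int poly)) j =
  (if j < 2 then 0 else 2 * coeff p (j - 2)) - coeff p j - (if j < 4 then 0 else coeff q (j - 4))"
  by (simp add: Xn two_monom left_diff_distrib coeff_monom_mult)
lemma "coeff ((monom 1 3 - monom 2 2 - monom 1 1 + 1) :: int poly) j = (if j = 3 then 1 else if j = 2 then -2 else if j = 1 then -1 else if j = 0 then 1 else 0)"
  by (simp add: coeff_1)
definition ac :: "nat \<Rightarrow> nat \<Rightarrow> int" where
  "ac m k = (-1)^((k+1) div 2) * int (((m+k) div 2) choose k)"
definition T :: "nat \<Rightarrow> int poly" where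
  "T m = (\<Sum>k = 0..m. monom (ac m k) (m - k))"

lemma ac_zero: "m < k \<Longrightarrow> ac m k = 0"
  by (simp add: ac_def binomial_eq_0)

lemma coeff_T: "coeff (T m) j = (if j \<le> m then ac m (m - j) else 0)"
proof -
  have "coeff (T m) j = (\<Sum>k = 0..m. if m - k = j then ac m k else 0)"
    by (simp add: T_def coeff_sum)
  also have "\<dots> = (\<Sum>k = 0..m. if k = m - j \<and> j \<le> m then ac m k else 0)"
    by (rule sum.cong) auto
  also have "\<dots> = (if j \<le> m then ac m (m - j) else 0)"
    by (cases "j \<le> m") (auto simp: sum.delta)
  finally show ?thesis .
qed

lemma binom_id: "int ((Q+2) choose (k+2)) = 2 * int ((Q+1) choose (k+2)) + int (Q choose k) - int (Q choose (k+2))"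
proof -
  have a: "(Q+2) choose (k+2) = ((Q+1) choose (k+1)) + ((Q+1) choose (k+2))"
    using binomial_Suc_Suc[of "Q+1" "k+1"] by simp
  have b: "(Q+1) choose (k+1) = (Q choose k) + (Q choose (k+1))"
    using binomial_Suc_Suc[of Q k] by simp
  have c: "(Q+1) choose (k+2) = (Q choose (k+1)) + (Q choose (k+2))"
    using binomial_Suc_Suc[of Q "k+1"] by simp
  show ?thesis unfolding a b c by simp
qed

lemma ac_rec: assumes "m \<ge> 4"
  shows "ac m k = 2 * ac (m-2) k - (if k \<ge> 2 then ac (m-2) (k-2) else 0) - ac (m-4) k"
proof -
  obtain r where m: "m = r + 4" using assms by (metis add.commute le_Suc_ex)
  consider "k = 0" | "k = 1" | k' where "k = k' + 2" by (metis add_2_eq_Suc' not0_implies_Suc One_nat_def)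
  then show ?thesis
  proof cases
    case 1 then show ?thesis by (simp add: ac_def)
  next
    case 2
    have a: "(r + 4 + 1) div 2 = (r + 1) div 2 + 2" "(r + 2 + 1) div 2 = (r + 1) div 2 + 1" by linarith+
    show ?thesis unfolding m 2 ac_def by (simp add: a)
  next
    case 3
    define Q where "Q = (r + k' + 2) div 2"
    have P1: "(m + k) div 2 = Q + 2" unfolding Q_def m 3 by presburger
    have P2: "(m - 2 + k) div 2 = Q + 1" unfolding Q_def m 3 by presburger
    have P3: "(m - 4 + k) div 2 = Q" unfolding Q_def m 3 by presburger
    have P4: "(m - 2 + (k - 2)) div 2 = Q" unfolding Q_def m 3 by presburger
    note P = P1 P2 P3 P4
    have s: "(k + 1) div 2 = Suc ((k - 2 + 1) div 2)" unfolding 3 by linarith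
    have sg: "(-1::int)^((k+1) div 2) = - ((-1)^((k - 2 + 1) div 2))"
      unfolding s by simp
    have k: "k - 2 = k'" "k = k' + 2" using 3 by auto
    show ?thesis unfolding ac_def
   apply (unfold P) apply (unfold sg) apply (unfold k)
      using binom_id[of Q k'] by (simp add: algebra_simps)
  qed
qed

lemma T_rec: assumes "m \<ge> 4"
  shows "T m = (2*[:0,1:]^2 - 1) * T (m-2) - [:0,1:]^4 * T (m - 4)"
proof (rule poly_eqI)
  fix j
  have "coeff ((2*[:0,1:]^2 - 1) * T (m-2) - [:0,1:]^4 * T (m - 4)) j =
    (if j < 2 then 0 else 2 * coeff (T (m-2)) (j - 2)) - coeff (T (m-2)) j - (if j < 4 then 0 else coeff (T (m-4)) (j - 4))"
    by (simp add: Xn two_monom left_diff_distrib coeff_monom_mult)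
  also have "\<dots> = coeff (T m) j"
  proof (cases "j \<le> m")
    case False
    have "\<not> j - 2 \<le> m - 2" "\<not> j \<le> m - 2" "\<not> j - 4 \<le> m - 4" using False assms by auto
    then show ?thesis using False assms by (simp add: coeff_T)
  next
    case True
    define k where "k = m - j"
    have c1: "(if j < 2 then 0 else 2 * coeff (T (m-2)) (j - 2)) = 2 * ac (m-2) k"
    proof (cases "j < 2")
      case True then show ?thesis using ac_zero[of "m-2" k] assms unfolding k_def by simp
    next
      case False
      have "j - 2 \<le> m - 2" "m - 2 - (j - 2) = k" using False \<open>j \<le> m\<close> unfolding k_def by auto
      then show ?thesis using False by (simp add: coeff_T)
    qed
    have c2: "coeff (T (m-2)) j = (if k \<ge> 2 then ac (m-2) (k-2) else 0)"
    proof (cases "j \<le> m - 2")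
      case True
      have "m - 2 - j = k - 2" "k \<ge> 2" using True assms unfolding k_def by auto
      then show ?thesis using True by (simp add: coeff_T)
    next
      case False
      have "\<not> k \<ge> 2" using False \<open>j \<le> m\<close> unfolding k_def by auto
      then show ?thesis using False by (simp add: coeff_T)
    qed
    have c3: "(if j < 4 then 0 else coeff (T (m-4)) (j - 4)) = ac (m-4) k"
    proof (cases "j < 4")
      case True then show ?thesis using ac_zero[of "m-4" k] assms unfolding k_def by simp
    next
      case False
      have "j - 4 \<le> m - 4" "m - 4 - (j - 4) = k" using False \<open>j \<le> m\<close> unfolding k_def by auto
      then show ?thesis using False by (simp add: coeff_T)
    qed
    have c0: "coeff (T m) j = ac m k" using True unfolding k_def by (simp add: coeff_T)
    show ?thesis unfolding c1 c2 c3 c0 by (rule ac_rec[OF assms, symmetric])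
  qed
  finally show "coeff (T m) j = coeff ((2*[:0,1:]^2 - 1) * T (m-2) - [:0,1:]^4 * T (m - 4)) j" ..
qed


lemma T0: "T 0 = 1" by (simp add: T_def ac_def)

lemma T_base:
  "T 1 = [:0,1:] - 1" "T 2 = [:0,1:]^2 - [:0,1:] - 1" "T 3 = [:0,1:]^3 - 2*[:0,1:]^2 - [:0,1:] + 1"
proof -
  have c: "j = 0 \<or> j = 1 \<or> j = 2 \<or> j = 3 \<or> j > 3" for j :: nat by auto
  show "T 1 = [:0,1:] - 1"
  proof (rule poly_eqI)
    fix j show "coeff (T 1) j = coeff ([:0,1:] - 1) j"
      using c[of j] by (elim disjE) (auto simp: coeff_T ac_def X_monom coeff_1)
  qed
  show "T 2 = [:0,1:]^2 - [:0,1:] - 1"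
  proof (rule poly_eqI)
    fix j show "coeff (T 2) j = coeff ([:0,1:]^2 - [:0,1:] - 1) j"
      using c[of j] by (elim disjE) (auto simp: coeff_T ac_def X_monom monom_power coeff_1)
  qed
  have a3: "ac 3 0 = 1" "ac 3 1 = -2" "ac 3 2 = -1" "ac 3 3 = 1"
    by (simp_all add: ac_def)
  have r: "[:0,1:]^3 - 2*[:0,1:]^2 - [:0,1:] + 1 = monom 1 3 - monom 2 2 - monom 1 1 + (1::int poly)"
    unfolding Xn two_monom unfolding X_monom ..
  show "T 3 = [:0,1:]^3 - 2*[:0,1:]^2 - [:0,1:] + 1"
    unfolding r
  proof (rule poly_eqI)
    fix j show "coeff (T 3) j = coeff (monom 1 3 - monom 2 2 - monom 1 1 + (1::int poly)) j"
      using c[of j] by (elim disjE) (auto simp: coeff_T a3[unfolded One_nat_def] a3 coeff_1)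
  qed
qed

lemma D_T: "D m = T m"
proof (induction m rule: less_induct)
  case (less m)
  show ?case
  proof (cases "m \<ge> 4")
    case True
    then show ?thesis using rec4[OF True] T_rec[OF True] less[of "m-2"] less[of "m-4"] by simp
  next
    case False
    then have "m = 0 \<or> m = 1 \<or> m = 2 \<or> m = 3" by auto
    then show ?thesis using T0 T_base D1 D2 D3 by auto
  qed
qed

theorem theorem3p1:
  fixes p n :: nat
  assumes "prime p" and "n \<ge> 2"
  shows "char_poly (zdg_matrix n) =
    (\<Sum>k = 0..n - 1. monom ((-1) ^ ((k + 1) div 2) * int (((n - 1 + k) div 2) choose k)) (n - 1 - k))"
proof -
  have "char_poly_matrix (zdg_matrix n) = G 1 (n - 1)"
    by (rule eq_matI) (auto simp: char_poly_matrix_def zdg_matrix_def)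
  hence "char_poly (zdg_matrix n) = D (n - 1)" by (simp add: char_poly_def)
  also have "\<dots> = T (n - 1)" by (rule D_T)
  finally show ?thesis by (simp add: T_def ac_def)
qed

end
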